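(* Let $R$ be a $*$-ring with $2\in U(R)$. Then every $u\in R$ with $u^2=1$ satisfies $u^*=u$ if and only if every idempotent of $R$ is a projection.
   Context: A $*$-ring is a ring with identity with an involution $*$. A projection is $p$ with $p^2=p=p^*$. $U(R)$ is the unit group. *)

theory Defs
  imports Main
begin

definition is_involution :: "('a::ring_1 \<Rightarrow> 'a) \<Rightarrow> bool" where
  "is_involution star \<longleftrightarrow>
     (\<forall>a b. star (a + b) = star a + star b) \<and>
     (\<forall>a b. star (a * b) = star b * star a) \<and>
     (\<forall>a. star (star a) = a)"

definition is_unit_ring :: "'a::ring_1 \<Rightarrow> bool" where
  "is_unit_ring x \<longleftrightarrow> (\<exists>y. x * y = 1 \<and> y * x = 1)"

definition is_projection :: "('a::ring_1 \<Rightarrow> 'a) \<Rightarrow> 'a \<Rightarrow> bool" where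
  "is_projection star p \<longleftrightarrow> p * p = p \<and> p = star p"

end

theory Submission
  imports Defs
begin

theorem lemma2p3:
  fixes star :: "'a::ring_1 \<Rightarrow> 'a"
  assumes "is_involution star"
    and "is_unit_ring (2::'a)"
  shows "(\<forall>u::'a. u * u = 1 \<longrightarrow> star u = u) \<longleftrightarrow>
         (\<forall>e::'a. e * e = e \<longrightarrow> is_projection star e)"
proof -
  have add: "\<And>a b. star (a + b) = star a + star b"
   and mul: "\<And>a b. star (a * b) = star b * star a"
   and inv: "\<And>a. star (star a) = a" using assms(1) unfolding is_involution_def by auto
  obtain y where y1: "2 * y = (1::'a)" and y2: "y * 2 = 1"
    using assms(2) unfolding is_unit_ring_def by auto
  have s0: "star 0 = 0" using add[of 0 0] by simp
  have sneg: "\<And>a. star (- a) = - star a"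
    using add s0 by (metis add.right_inverse add_eq_0_iff)
  have sdiff: "\<And>a b. star (a - b) = star a - star b"
    by (metis add sneg diff_conv_add_uminus)
  have s1: "star 1 = 1"
  proof -
    have "star 1 = star 1 * star (star 1)" using inv[of 1] by simp
    also have "\<dots> = star (star 1 * 1)" by (rule mul[symmetric])
    also have "\<dots> = 1" using inv[of 1] by simp
    finally show ?thesis .
  qed
  have two: "\<And>a::'a. 2 * a = a + a" by (metis distrib_right mult_1_left one_add_one)
  have two': "\<And>a::'a. a * 2 = a + a" by (metis distrib_left mult_1_right one_add_one)
  have cen: "\<And>x. y * x = x * y"
  proof -
    fix x
    have "y * x = y * (x * (2 * y))" by (simp add: y1)
    also have "\<dots> = y * (2 * x) * y" by (simp add: two two' mult.assoc ring_distribs)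
    also have "\<dots> = x * y" by (simp add: mult.assoc[symmetric] y2)
    finally show "y * x = x * y" .
  qed
  have canc: "\<And>a b::'a. a + a = b + b \<Longrightarrow> a = b"
  proof -
    fix a b :: 'a assume "a + a = b + b"
    hence "y * (2 * a) = y * (2 * b)" by (simp add: two)
    thus "a = b" by (simp add: mult.assoc[symmetric] y2)
  qed
  show ?thesis
  proof
    assume H: "\<forall>u::'a. u * u = 1 \<longrightarrow> star u = u"
    show "\<forall>e::'a. e * e = e \<longrightarrow> is_projection star e"
    proof (intro allI impI)
      fix e :: 'a assume ee: "e * e = e"
      let ?u = "1 - (e + e)"
      have "?u * ?u = 1" by (simp add: algebra_simps ee)
      hence "star ?u = ?u" using H by blast
      hence "1 - (star e + star e) = 1 - (e + e)" by (simp add: sdiff add s1)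
      hence "1 - (1 - (star e + star e)) = 1 - (1 - (e + e))" by (rule arg_cong)
      hence "star e + star e = e + e" by (simp add: diff_diff_eq2)
      hence "star e = e" by (rule canc)
      thus "is_projection star e" unfolding is_projection_def using ee by simp
    qed
  next
    assume H: "\<forall>e::'a. e * e = e \<longrightarrow> is_projection star e"
    show "\<forall>u::'a. u * u = 1 \<longrightarrow> star u = u"
    proof (intro allI impI)
      fix u :: 'a assume uu: "u * u = 1"
      define e where "e = (1 + u) * y"
      have sq: "(1 + u) * (1 + u) = (1 + u) + (1 + u)" by (simp add: algebra_simps uu)
      have "e * e = (1 + u) * (1 + u) * (y * y)"
        unfolding e_def by (metis cen mult.assoc)
      also have "\<dots> = (1 + u) * (2 * y) * y" by (simp only: sq two'[symmetric] mult.assoc)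
      also have "\<dots> = e" by (simp add: y1 e_def)
      finally have "e * e = e" .
      hence se: "star e = e" using H unfolding is_projection_def by auto
      have ue: "u = (e + e) - 1"
      proof -
        have "e + e = (1 + u) * (y * 2)" by (simp add: e_def two' mult.assoc distrib_left)
        thus ?thesis by (simp add: y2)
      qed
      have "star u = star ((e + e) - 1)" using ue by simp
      also have "\<dots> = (e + e) - 1" by (simp only: sdiff add s1 se)
      finally show "star u = u" using ue by simp
    qed
  qed
qed

end
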